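(* Assume (A1), (A2), (A4) for problem (DC), and assume (instead of (A3)) only that each $\nabla f_i$ is Lipschitz continuous on $\mathcal X$ with constant $L_{\nabla f_i}$. Let $\boldsymbol\tau>\mathbf 0$ with $\tau^{\min}:=\min_i\tau_i>2\sum_{i=1}^IL_{\nabla f_i}$, and let $\gamma^\nu=1$ for all $\nu$. Let $\{\mathbf x^\nu\}$ be generated by Algorithm 1 (so $\mathbf x^{\nu+1}=\hat{\mathbf x}(\mathbf x^\nu)$) from some $\mathbf x^0\in\Xi$. Then either $\mathbf x^\nu$ is a stationary point of (DC) for some finite $\nu$, or $\{\mathbf x^\nu\}$ has at least one limit point and every limit point is a stationary point of (DC).
   Context: Let $I\ge1$, $n_1,\dots,n_I\ge1$, $n=\sum_i n_i$. Vectors $\mathbf x\in\mathbb R^n$ are partitioned as $\mathbf x=(\mathbf x_i)_{i=1}^I$, $\mathbf x_i\in\mathbb R^{n_i}$; $\mathbf x_{-i}=(\mathbf x_j)_{j\ne i}$, and $(\mathbf x_i,\mathbf y_{-i})$ is the vector with $i$-th block $\mathbf x_i$ and $j$-th block $\mathbf y_j$ for $j\neq i$. Given sets $\mathcal X_i\subseteq\mathbb R^{n_i}$, functions $f_i,g_i:\mathbb R^n\to\mathbb R$ and $\mathbf h=(h_1,\dots,h_{n_c}):\mathbb R^n\to\mathbb R^{n_c}$, problem (DC) is: minimize $\theta(\mathbf x)=\sum_{i=1}^I(f_i(\mathbf x)-g_i(\mathbf x))$ subject to $\mathbf x_i\in\mathcal X_i$ for all $i$ and $\mathbf h(\mathbf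 x)\le\mathbf 0$. Let $\mathcal X=\prod_i\mathcal X_i$, $\mathcal X_{-i}=\prod_{j\ne i}\mathcal X_j$, $\Xi=\{\mathbf x\in\mathcal X:\mathbf h(\mathbf x)\le\mathbf 0\}$. Assumptions: (A1) each $f_i,g_i,h_j$ is convex and continuously differentiable on an open set containing $\mathcal X$; (A2) each $\mathcal X_i$ is nonempty, closed, convex; (A4) for some $\mathbf x^0\in\Xi$ the set $\{\mathbf x\in\Xi:\theta(\mathbf x)\le\theta(\mathbf x^0)\}$ is compact. A stationary point of (DC) is $\mathbf x^\star\in\Xi$ with $\nabla\theta(\mathbf x^\star)^T(\mathbf y-\mathbf x^\star)\ge0$ for all $\mathbf y\in\Xi$. For $\mathbf y\in\mathcal X$ and $\boldsymbol\tau=(\tau_i)>\mathbf 0$ let $\tilde\theta(\mathbf x;\mathbf y)=\sum_i\tilde\theta_i(\mathbf x_i;\mathbf y)$ with $\tilde\theta_i(\mathbf x_i;\mathbf y)=f_i(\mathbf x_i,\mathbf y_{-i})+\sum_{j\ne i}\nabla_{\mathbf x_i}f_j(\mathbf y)^T(\mathbf x_i-\mathbf y_i)-g_i(\mathbf y)-\sum_{j=1}^I\nabla_{\mathbf x_i}g_j(\mathbf y)^T(\mathbf x_i-\mathbf y_i)+\tfrac{\tau_i}{2}\|\mathbf x_i-\mathbf y_i\|^2,$ and $\hat{\mathbf x}(\mathbf y):=\arg\min_{\mathbf x\in\Xi}\tilde\theta(\mathbf x;\mathbf y)$ (unique, since $\tilde\theta(\cdot;\mathbf y)$ is strongly convex).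 Algorithm 1: given $\boldsymbol\tau$, $\{\gamma^\nu\}\subset(0,1]$ and $\mathbf x^0\in\Xi$, set $\mathbf x^{\nu+1}=\mathbf x^\nu+\gamma^\nu(\hat{\mathbf x}(\mathbf x^\nu)-\mathbf x^\nu)$. *)

theory Defs
  imports "HOL-Analysis.Analysis"
begin

text \<open>The block structure is given by a
  map blk :: 'n => 'i assigning each coordinate to its block (blocks indexed by the
  finite type 'i).  A block x_i in R^{n_i} is represented by its zero-padded copy
  block_proj blk i x in the coordinate subspace of block i.\<close>

definition block_proj :: "('n \<Rightarrow> 'i) \<Rightarrow> 'i \<Rightarrow> real^'n \<Rightarrow> real^'n" where
  "block_proj blk i x = (\<chi> k. if blk k = i then x $ k else 0)"

definition block_repl :: "('n \<Rightarrow> 'i) \<Rightarrow> 'i \<Rightarrow> real^'n \<Rightarrow> real^'n \<Rightarrow> real^'n" where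
  "block_repl blk i x y = (\<chi> k. if blk k = i then x $ k else y $ k)"

definition prod_set :: "('n \<Rightarrow> 'i) \<Rightarrow> ('i \<Rightarrow> (real^'n) set) \<Rightarrow> (real^'n) set" where
  "prod_set blk Xs = {x. \<forall>i. block_proj blk i x \<in> Xs i}"

definition feas_set :: "('n \<Rightarrow> 'i) \<Rightarrow> ('i \<Rightarrow> (real^'n) set) \<Rightarrow> nat \<Rightarrow> (nat \<Rightarrow> real^'n \<Rightarrow> real)
    \<Rightarrow> (real^'n) set" where
  "feas_set blk Xs nc h = {x \<in> prod_set blk Xs. \<forall>j<nc. h j x \<le> 0}"

definition dc_obj :: "('i::finite \<Rightarrow> real^'n \<Rightarrow> real) \<Rightarrow> ('i \<Rightarrow> real^'n \<Rightarrow> real) \<Rightarrow> real^'n \<Rightarrow> real" where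
  "dc_obj f g x = (\<Sum>i\<in>UNIV. f i x - g i x)"

definition dc_stationary :: "('n \<Rightarrow> 'i::finite) \<Rightarrow> ('i \<Rightarrow> (real^'n) set) \<Rightarrow> nat
    \<Rightarrow> (nat \<Rightarrow> real^'n \<Rightarrow> real) \<Rightarrow> ('i \<Rightarrow> real^'n \<Rightarrow> real^'n) \<Rightarrow> ('i \<Rightarrow> real^'n \<Rightarrow> real^'n)
    \<Rightarrow> real^'n \<Rightarrow> bool" where
  "dc_stationary blk Xs nc h Df Dg xs \<longleftrightarrow> xs \<in> feas_set blk Xs nc h \<and>
     (\<forall>y \<in> feas_set blk Xs nc h. (\<Sum>i\<in>UNIV. Df i xs - Dg i xs) \<bullet> (y - xs) \<ge> 0)"

text \<open>The surrogate tilde-theta(x; y) = sum_i tilde-theta_i(x_i; y).  Note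
  nabla_{x_i} phi(y)^T (x_i - y_i) = nabla phi(y) . block_proj blk i (x - y).\<close>
definition surr :: "('n \<Rightarrow> 'i::finite) \<Rightarrow> ('i \<Rightarrow> real^'n \<Rightarrow> real) \<Rightarrow> ('i \<Rightarrow> real^'n \<Rightarrow> real)
    \<Rightarrow> ('i \<Rightarrow> real^'n \<Rightarrow> real^'n) \<Rightarrow> ('i \<Rightarrow> real^'n \<Rightarrow> real^'n) \<Rightarrow> ('i \<Rightarrow> real)
    \<Rightarrow> real^'n \<Rightarrow> real^'n \<Rightarrow> real" where
  "surr blk f g Df Dg \<tau> x y = (\<Sum>i\<in>UNIV.
       f i (block_repl blk i x y)
     + (\<Sum>j\<in>UNIV - {i}. Df j y \<bullet> block_proj blk i (x - y))
     - g i y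
     - (\<Sum>j\<in>UNIV. Dg j y \<bullet> block_proj blk i (x - y))
     + \<tau> i / 2 * (norm (block_proj blk i (x - y)))\<^sup>2)"

definition xhat :: "('n \<Rightarrow> 'i::finite) \<Rightarrow> ('i \<Rightarrow> (real^'n) set) \<Rightarrow> nat \<Rightarrow> (nat \<Rightarrow> real^'n \<Rightarrow> real)
    \<Rightarrow> ('i \<Rightarrow> real^'n \<Rightarrow> real) \<Rightarrow> ('i \<Rightarrow> real^'n \<Rightarrow> real)
    \<Rightarrow> ('i \<Rightarrow> real^'n \<Rightarrow> real^'n) \<Rightarrow> ('i \<Rightarrow> real^'n \<Rightarrow> real^'n) \<Rightarrow> ('i \<Rightarrow> real)
    \<Rightarrow> real^'n \<Rightarrow> real^'n" where
  "xhat blk Xs nc h f g Df Dg \<tau> y = (THE x. x \<in> feas_set blk Xs nc h \<and>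
      (\<forall>z \<in> feas_set blk Xs nc h. surr blk f g Df Dg \<tau> x y \<le> surr blk f g Df Dg \<tau> z y))"

definition limit_point :: "(nat \<Rightarrow> 'a::topological_space) \<Rightarrow> 'a \<Rightarrow> bool" where
  "limit_point x l \<longleftrightarrow> (\<exists>r. strict_mono r \<and> (x \<circ> r) \<longlonglongrightarrow> l)"

end

theory Submission
  imports Defs
begin


lemma bp_add: "block_proj blk i (a + b) = block_proj blk i a + block_proj blk i b"
  by (simp add: block_proj_def vec_eq_iff)
lemma bp_diff: "block_proj blk i (a - b) = block_proj blk i a - block_proj blk i b"
  by (simp add: block_proj_def vec_eq_iff)
lemma bp_scale: "block_proj blk i (c *\<^sub>R a) = c *\<^sub>R block_proj blk i a"
  by (simp add: block_proj_def vec_eq_iff)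
lemma bp_zero[simp]: "block_proj blk i 0 = 0"
  by (simp add: block_proj_def vec_eq_iff)
lemma bp_linear: "linear (block_proj blk i)"
  by (rule linearI) (simp_all add: bp_add bp_scale)
lemma bp_bl: "bounded_linear (block_proj blk i)"
  by (rule linear_conv_bounded_linear[THEN iffD1, OF bp_linear])
lemma bp_sum: "(\<Sum>i\<in>UNIV. block_proj blk i v) = (v::real^'n)"
  for blk :: "'n::finite \<Rightarrow> 'i::finite"
  by (simp add: block_proj_def vec_eq_iff)
lemma repl_eq: "block_repl blk i x y = y + block_proj blk i (x - y)"
  by (simp add: block_proj_def block_repl_def vec_eq_iff)
lemma bp_repl: "block_proj blk j (block_repl blk i x y) = (if j = i then block_proj blk j x else block_proj blk j y)"
  by (auto simp add: block_proj_def block_repl_def vec_eq_iff)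
lemma norm_mono_comp: "(\<And>k. \<bar>u$k\<bar> \<le> \<bar>v$k\<bar>) \<Longrightarrow> norm (u::real^'n) \<le> norm v"
  unfolding norm_vec_def by (rule L2_set_mono) auto
lemma norm_bp_le: "norm (block_proj blk i v) \<le> norm v"
  by (rule norm_mono_comp) (simp add: block_proj_def)
lemma inner_bp_sum: "(\<Sum>i\<in>UNIV. a \<bullet> block_proj blk i v) = a \<bullet> (v::real^'n)"
  for blk :: "'n::finite \<Rightarrow> 'i::finite"
  by (simp add: inner_sum_right[symmetric] bp_sum)
lemma norm_sq_blocks: "(norm (v::real^'n))\<^sup>2 = (\<Sum>i\<in>UNIV. (norm (block_proj blk i v))\<^sup>2)"
  for blk :: "'n::finite \<Rightarrow> 'i::finite"
proof -
  have e: "\<And>w::real^'n. (norm w)\<^sup>2 = (\<Sum>k\<in>UNIV. (w$k)\<^sup>2)"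
    by (simp only: power2_norm_eq_inner inner_vec_def) (simp add: power2_eq_square)
  have "(\<Sum>i\<in>UNIV. (norm (block_proj blk i v))\<^sup>2) = (\<Sum>i\<in>UNIV. \<Sum>k\<in>UNIV. (if blk k = i then (v$k)\<^sup>2 else 0))"
    unfolding e block_proj_def by (auto intro!: sum.cong)
  also have "\<dots> = (\<Sum>k\<in>UNIV. \<Sum>i\<in>UNIV. (if blk k = i then (v$k)\<^sup>2 else 0))"
    by (rule sum.swap)
  also have "\<dots> = (norm v)\<^sup>2" by (simp add: e)
  finally show ?thesis by simp
qed

lemma line_deriv_s:
  assumes "(\<phi> has_derivative (\<lambda>v. D \<bullet> v)) (at (p + s *\<^sub>R w))"
  shows "((\<lambda>t. \<phi> (p + t *\<^sub>R w)) has_field_derivative (D \<bullet> w)) (at s)"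
proof -
  have l: "((\<lambda>t. p + t *\<^sub>R w) has_derivative (\<lambda>t. t *\<^sub>R w)) (at (s::real))"
    by (auto intro!: derivative_eq_intros)
  have "((\<lambda>t. \<phi> (p + t *\<^sub>R w)) has_derivative (\<lambda>t. D \<bullet> (t *\<^sub>R w))) (at s)"
    using has_derivative_compose[OF l, of \<phi> "\<lambda>v. D \<bullet> v"] assms by simp
  moreover have "(\<lambda>t. D \<bullet> (t *\<^sub>R w)) = (*) (D \<bullet> w)" by (auto simp: mult.commute)
  ultimately show ?thesis by (simp add: has_field_derivative_def)
qed

lemma line_deriv:
  assumes "(\<phi> has_derivative (\<lambda>v. D \<bullet> v)) (at p)"
  shows "((\<lambda>t. \<phi> (p + t *\<^sub>R w)) has_field_derivative (D \<bullet> w)) (at 0)"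
proof -
  have l: "((\<lambda>t. p + t *\<^sub>R w) has_derivative (\<lambda>t. t *\<^sub>R w)) (at (0::real))"
    by (auto intro!: derivative_eq_intros)
  have "((\<lambda>t. \<phi> (p + t *\<^sub>R w)) has_derivative (\<lambda>t. D \<bullet> (t *\<^sub>R w))) (at 0)"
    using has_derivative_compose[OF l, of \<phi> "\<lambda>v. D \<bullet> v"] assms by simp
  moreover have "(\<lambda>t. D \<bullet> (t *\<^sub>R w)) = (*) (D \<bullet> w)" by (auto simp: mult.commute)
  ultimately show ?thesis by (simp add: has_field_derivative_def)
qed

lemma deriv_quot:
  assumes "(\<psi> has_field_derivative D) (at (0::real))"
  shows "((\<lambda>t. (\<psi> t - \<psi> 0) / t) \<longlongrightarrow> D) (at_right 0)"
  using assms unfolding has_field_derivative_iff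
  by (simp add: filterlim_at_split)

lemma deriv_right_nonneg:
  assumes "(\<psi> has_field_derivative D) (at (0::real))"
    and "\<And>t. 0 < t \<Longrightarrow> t \<le> 1 \<Longrightarrow> \<psi> 0 \<le> \<psi> t"
  shows "D \<ge> 0"
proof (rule tendsto_lowerbound[OF deriv_quot[OF assms(1)]])
  show "\<forall>\<^sub>F t in at_right 0. 0 \<le> (\<psi> t - \<psi> 0) / t"
    using eventually_at_right_real[of 0 1, OF zero_less_one]
    by eventually_elim (use assms(2) in auto)
qed simp

lemma deriv_right_le:
  assumes "(\<psi> has_field_derivative D) (at (0::real))"
    and "\<And>t. 0 < t \<Longrightarrow> t < 1 \<Longrightarrow> (\<psi> t - \<psi> 0) / t \<le> M"
  shows "D \<le> M"
proof (rule tendsto_upperbound[OF deriv_quot[OF assms(1)]])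
  show "\<forall>\<^sub>F t in at_right 0. (\<psi> t - \<psi> 0) / t \<le> M"
    using eventually_at_right_real[of 0 1, OF zero_less_one]
    by eventually_elim (use assms(2) in auto)
qed simp

lemma grad_ineq:
  assumes cv: "convex_on U \<phi>" and d: "(\<phi> has_derivative (\<lambda>v. D \<bullet> v)) (at y)"
    and y: "y \<in> U" and z: "z \<in> U"
  shows "\<phi> z \<ge> \<phi> y + D \<bullet> (z - y)"
proof -
  have "D \<bullet> (z - y) \<le> \<phi> z - \<phi> y"
  proof (rule deriv_right_le[OF line_deriv[OF d]])
    fix t :: real assume t: "0 < t" "t < 1"
    have "\<phi> ((1 - t) *\<^sub>R y + t *\<^sub>R z) \<le> (1 - t) * \<phi> y + t * \<phi> z"
      using convex_onD[OF cv, of t y z] t y z by simp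
    moreover have "(1 - t) *\<^sub>R y + t *\<^sub>R z = y + t *\<^sub>R (z - y)" by (simp add: algebra_simps)
    ultimately have "\<phi> (y + t *\<^sub>R (z - y)) - \<phi> y \<le> t * (\<phi> z - \<phi> y)" by (simp add: algebra_simps)
    then show "(\<phi> (y + t *\<^sub>R (z - y)) - \<phi> (y + 0 *\<^sub>R (z - y))) / t \<le> \<phi> z - \<phi> y"
      using t by (simp add: divide_le_eq mult.commute)
  qed
  then show ?thesis by simp
qed

lemma bp_tendsto[tendsto_intros]: "(a \<longlongrightarrow> a0) F \<Longrightarrow> ((\<lambda>x. block_proj blk i (a x)) \<longlongrightarrow> block_proj blk i a0) F"
  by (rule bounded_linear.tendsto[OF bp_bl])

lemma repl_tendsto: "(a \<longlongrightarrow> a0) F \<Longrightarrow> (b \<longlongrightarrow> b0) F \<Longrightarrow>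
   ((\<lambda>x. block_repl blk i (a x) (b x)) \<longlongrightarrow> block_repl blk i a0 b0) F"
  unfolding repl_eq by (intro tendsto_intros)

lemma Dsum: "(\<Sum>i\<in>UNIV. \<Sum>j\<in>UNIV - {i}. D j \<bullet> block_proj blk i v)
   = (\<Sum>j\<in>UNIV. D j) \<bullet> (v::real^'n) - (\<Sum>i\<in>UNIV. D i \<bullet> block_proj blk i v)"
  for blk :: "'n::finite \<Rightarrow> 'i::finite"
proof -
  have "\<And>i. (\<Sum>j\<in>UNIV - {i}. D j \<bullet> block_proj blk i v) = (\<Sum>j\<in>UNIV. D j \<bullet> block_proj blk i v) - D i \<bullet> block_proj blk i v"
    by (simp add: sum_diff1)
  then have "(\<Sum>i\<in>UNIV. \<Sum>j\<in>UNIV - {i}. D j \<bullet> block_proj blk i v)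
     = (\<Sum>i\<in>UNIV. \<Sum>j\<in>UNIV. D j \<bullet> block_proj blk i v) - (\<Sum>i\<in>UNIV. D i \<bullet> block_proj blk i v)"
    by (simp add: sum_subtractf)
  also have "(\<Sum>i\<in>UNIV. \<Sum>j\<in>UNIV. D j \<bullet> block_proj blk i v) = (\<Sum>j\<in>UNIV. \<Sum>i\<in>UNIV. D j \<bullet> block_proj blk i v)"
    by (rule sum.swap)
  also have "\<dots> = (\<Sum>j\<in>UNIV. D j \<bullet> v)" by (simp add: inner_bp_sum)
  also have "\<dots> = (\<Sum>j\<in>UNIV. D j) \<bullet> v" by (simp add: inner_sum_left)
  finally show ?thesis .
qed

lemma Dsum2: "(\<Sum>i\<in>UNIV. \<Sum>j\<in>UNIV. D j \<bullet> block_proj blk i v) = (\<Sum>j\<in>UNIV. D j) \<bullet> (v::real^'n)"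
  for blk :: "'n::finite \<Rightarrow> 'i::finite"
proof -
  have "(\<Sum>i\<in>UNIV. \<Sum>j\<in>UNIV. D j \<bullet> block_proj blk i v) = (\<Sum>j\<in>UNIV. \<Sum>i\<in>UNIV. D j \<bullet> block_proj blk i v)"
    by (rule sum.swap)
  also have "\<dots> = (\<Sum>j\<in>UNIV. D j \<bullet> v)" by (simp add: inner_bp_sum)
  also have "\<dots> = (\<Sum>j\<in>UNIV. D j) \<bullet> v" by (simp add: inner_sum_left)
  finally show ?thesis .
qed

lemma mid_sq: "(norm ((1/2) *\<^sub>R (a + b) :: 'a::real_inner))\<^sup>2 = ((norm a)\<^sup>2 + (norm b)\<^sup>2)/2 - (norm (a - b))\<^sup>2 / 4"
  by (simp add: power2_norm_eq_inner inner_add_left inner_add_right inner_diff_left inner_diff_right inner_commute algebra_simps) (simp add: field_simps)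



locale dcs =
  fixes blk :: "'n::finite \<Rightarrow> 'i::finite"
    and Xs :: "'i \<Rightarrow> (real^'n) set"
    and f g :: "'i \<Rightarrow> real^'n \<Rightarrow> real"
    and Df Dg :: "'i \<Rightarrow> real^'n \<Rightarrow> real^'n"
    and nc :: nat
    and h :: "nat \<Rightarrow> real^'n \<Rightarrow> real"
    and L \<tau> :: "'i \<Rightarrow> real"
    and U :: "(real^'n) set"
  assumes Xs_closed: "\<And>i. closed (Xs i)" and Xs_convex: "\<And>i. convex (Xs i)"
    and openU: "open U" and XU: "prod_set blk Xs \<subseteq> U"
    and fconv: "\<And>i. convex_on U (f i)" and gconv: "\<And>i. convex_on U (g i)"
    and fder: "\<And>i z. z \<in> U \<Longrightarrow> (f i has_derivative (\<lambda>v. Df i z \<bullet> v)) (at z)"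
    and gder: "\<And>i z. z \<in> U \<Longrightarrow> (g i has_derivative (\<lambda>v. Dg i z \<bullet> v)) (at z)"
    and Dfc: "\<And>i. continuous_on U (Df i)" and Dgc: "\<And>i. continuous_on U (Dg i)"
    and hcont: "\<And>j. j < nc \<Longrightarrow> continuous_on U (h j)"
    and hconv: "\<And>j. j < nc \<Longrightarrow> convex_on U (h j)"
    and Lip: "\<And>i u v. u \<in> prod_set blk Xs \<Longrightarrow> v \<in> prod_set blk Xs \<Longrightarrow>
       norm (Df i u - Df i v) \<le> L i * norm (u - v)"
    and Lnn: "\<And>i. L i \<ge> 0"
    and tau_pos: "\<And>i. \<tau> i > 0"
begin

abbreviation "X \<equiv> prod_set blk Xs"
abbreviation "Xi \<equiv> feas_set blk Xs nc h"
abbreviation "S \<equiv> surr blk f g Df Dg \<tau>"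
abbreviation "bp \<equiv> block_proj blk"
abbreviation "\<theta> \<equiv> dc_obj f g"

lemma memX: "x \<in> X \<longleftrightarrow> (\<forall>i. bp i x \<in> Xs i)"
  by (simp add: prod_set_def)

lemma repl_X: "x \<in> X \<Longrightarrow> y \<in> X \<Longrightarrow> block_repl blk i x y \<in> X"
  by (simp add: memX bp_repl)

lemma convex_X: "convex X"
  unfolding convex_def
proof (intro ballI allI impI)
  fix x y :: "real^'n" and u v :: real
  assume "x \<in> X" "y \<in> X" "0 \<le> u" "0 \<le> v" "u + v = 1"
  then show "u *\<^sub>R x + v *\<^sub>R y \<in> X"
    unfolding memX bp_add bp_scale using convexD[OF Xs_convex] by blast
qed

lemma closed_X: "closed X"
proof -
  have "X = (\<Inter>i. bp i -` Xs i)" by (auto simp: memX)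
  moreover have "closed (bp i -` Xs i)" for i
    by (rule continuous_closed_vimage[OF Xs_closed]) (simp add: linear_continuous_at bp_bl)
  ultimately show ?thesis by auto
qed

lemma Xi_X: "Xi \<subseteq> X" by (auto simp: feas_set_def)

lemma Xi_U: "x \<in> Xi \<Longrightarrow> x \<in> U" using Xi_X XU by auto
lemma X_U: "x \<in> X \<Longrightarrow> x \<in> U" using XU by auto

lemma convex_Xi: "convex Xi"
  unfolding convex_def
proof (intro ballI allI impI)
  fix x y :: "real^'n" and u v :: real
  assume x: "x \<in> Xi" and y: "y \<in> Xi" and uv: "0 \<le> u" "0 \<le> v" "u + v = 1"
  have "u *\<^sub>R x + v *\<^sub>R y \<in> X"
    using convex_X x y uv Xi_X unfolding convex_def by blast
  moreover have "h j (u *\<^sub>R x + v *\<^sub>R y) \<le> 0" if j: "j < nc" for j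
  proof -
    have "h j (u *\<^sub>R x + v *\<^sub>R y) \<le> u * h j x + v * h j y"
      using hconv[OF j] Xi_U[OF x] Xi_U[OF y] uv unfolding convex_on_def by blast
    also have "\<dots> \<le> 0"
      using x y j uv by (auto simp: feas_set_def intro!: add_nonpos_nonpos mult_nonneg_nonpos)
    finally show ?thesis .
  qed
  ultimately show "u *\<^sub>R x + v *\<^sub>R y \<in> Xi" by (simp add: feas_set_def)
qed

lemma closed_Xi: "closed Xi"
proof -
  have "Xi = X \<inter> (\<Inter>j\<in>{..<nc}. {x \<in> X. h j x \<le> 0})" by (auto simp: feas_set_def)
  moreover have "closed {x \<in> X. h j x \<le> 0}" if "j < nc" for j
    using continuous_on_closed_Collect_le[OF continuous_on_subset[OF hcont[OF that] XU] continuous_on_const closed_X]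
    by simp
  then have "closed (\<Inter>j\<in>{..<nc}. {x \<in> X. h j x \<le> 0})" by (intro closed_INT) auto
  ultimately show ?thesis using closed_X closed_Int by simp
qed

lemma fcont: "continuous_on U (f i)"
  using fder has_derivative_continuous continuous_at_imp_continuous_on by blast
lemma gcont: "continuous_on U (g i)"
  using gder has_derivative_continuous continuous_at_imp_continuous_on by blast

lemma S_self: "S y y = \<theta> y"
  by (simp add: surr_def dc_obj_def repl_eq)

lemma S_tendsto:
  assumes a: "(a \<longlongrightarrow> a0) F" and b: "(b \<longlongrightarrow> b0) F" and a0: "a0 \<in> X" and b0: "b0 \<in> X"
    and ev: "\<forall>\<^sub>F x in F. a x \<in> X \<and> b x \<in> X"
  shows "((\<lambda>x. S (a x) (b x)) \<longlongrightarrow> S a0 b0) F"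
proof -
  have fi: "((\<lambda>x. f i (block_repl blk i (a x) (b x))) \<longlongrightarrow> f i (block_repl blk i a0 b0)) F" for i
    by (rule continuous_on_tendsto_compose[OF fcont repl_tendsto[OF a b]])
      (use X_U repl_X a0 b0 ev in \<open>auto elim!: eventually_mono\<close>)
  have gi: "((\<lambda>x. g i (b x)) \<longlongrightarrow> g i b0) F" for i
    by (rule continuous_on_tendsto_compose[OF gcont b]) (use X_U b0 ev in \<open>auto elim!: eventually_mono\<close>)
  have dfi: "((\<lambda>x. Df i (b x)) \<longlongrightarrow> Df i b0) F" for i
    by (rule continuous_on_tendsto_compose[OF Dfc b]) (use X_U b0 ev in \<open>auto elim!: eventually_mono\<close>)
  have dgi: "((\<lambda>x. Dg i (b x)) \<longlongrightarrow> Dg i b0) F" for i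
    by (rule continuous_on_tendsto_compose[OF Dgc b]) (use X_U b0 ev in \<open>auto elim!: eventually_mono\<close>)
  show ?thesis unfolding surr_def
    by (intro tendsto_intros fi gi dfi dgi a b)
qed

lemma S_cont: assumes y: "y \<in> X" shows "continuous_on X (\<lambda>x. S x y)"
  unfolding continuous_on_def
proof
  fix x assume x: "x \<in> X"
  have ev: "\<forall>\<^sub>F z in at x within X. z \<in> X" by (simp add: eventually_at_filter)
  show "((\<lambda>x. S x y) \<longlongrightarrow> S x y) (at x within X)"
    by (rule S_tendsto[OF tendsto_ident_at tendsto_const x y]) (use ev y in \<open>auto elim: eventually_mono\<close>)
qed

end


context dcs begin

definition "lin y v = (\<Sum>i\<in>UNIV. \<Sum>j\<in>UNIV - {i}. Df j y \<bullet> bp i v) - (\<Sum>j\<in>UNIV. Dg j y) \<bullet> v"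
definition "quad v = (\<Sum>i\<in>UNIV. \<tau> i / 2 * (norm (bp i v))\<^sup>2)"

lemma S_expand: "S x y = (\<Sum>i\<in>UNIV. f i (block_repl blk i x y)) - (\<Sum>i\<in>UNIV. g i y) + lin y (x - y) + quad (x - y)"
  unfolding surr_def lin_def quad_def
  by (simp add: sum.distrib sum_subtractf Dsum2)

lemma lin_mid: "lin y ((1/2) *\<^sub>R (a + b)) = (lin y a + lin y b) / 2"
  unfolding lin_def
  by (simp add: bp_add bp_scale inner_add_right sum.distrib sum_divide_distrib[symmetric] field_simps)

lemma quad_mid: "quad ((1/2) *\<^sub>R (a + b)) = (quad a + quad b) / 2 - (\<Sum>i\<in>UNIV. \<tau> i / 8 * (norm (bp i (a - b)))\<^sup>2)"
proof -
  have "\<tau> i / 2 * (norm (bp i ((1/2) *\<^sub>R (a + b))))\<^sup>2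
     = (\<tau> i / 2 * (norm (bp i a))\<^sup>2 + \<tau> i / 2 * (norm (bp i b))\<^sup>2) / 2 - \<tau> i / 8 * (norm (bp i (a - b)))\<^sup>2" for i
  proof -
    have q: "(norm (bp i ((1/2) *\<^sub>R (a + b))))\<^sup>2 = ((norm (bp i a))\<^sup>2 + (norm (bp i b))\<^sup>2)/2 - (norm (bp i (a - b)))\<^sup>2/4"
      unfolding bp_scale bp_add bp_diff by (rule mid_sq)
    show ?thesis unfolding q by (simp add: field_simps)
  qed
  then show ?thesis unfolding quad_def
    by (simp add: sum.distrib sum_subtractf sum_divide_distrib[symmetric])
qed

lemma f_mid:
  assumes x1: "x1 \<in> X" and x2: "x2 \<in> X" and y: "y \<in> X"
  shows "f i (block_repl blk i ((1/2) *\<^sub>R (x1 + x2)) y)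
     \<le> (f i (block_repl blk i x1 y) + f i (block_repl blk i x2 y)) / 2"
proof -
  have e: "block_repl blk i ((1/2) *\<^sub>R (x1 + x2)) y = (1 - 1/2) *\<^sub>R block_repl blk i x1 y + (1/2) *\<^sub>R block_repl blk i x2 y"
    by (simp add: block_repl_def vec_eq_iff field_simps)
  have "f i ((1 - 1/2) *\<^sub>R block_repl blk i x1 y + (1/2) *\<^sub>R block_repl blk i x2 y)
     \<le> (1 - 1/2) * f i (block_repl blk i x1 y) + (1/2) * f i (block_repl blk i x2 y)"
    by (rule convex_onD[OF fconv]) (use X_U repl_X x1 x2 y in auto)
  then show ?thesis unfolding e by simp
qed

lemma S_mid:
  assumes x1: "x1 \<in> X" and x2: "x2 \<in> X" and y: "y \<in> X"
  shows "S ((1/2) *\<^sub>R (x1 + x2)) y \<le> (S x1 y + S x2 y) / 2 - (\<Sum>i\<in>UNIV. \<tau> i / 8 * (norm (bp i (x1 - x2)))\<^sup>2)"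
proof -
  have m: "(1/2) *\<^sub>R (x1 + x2) - y = (1/2) *\<^sub>R ((x1 - y) + (x2 - y))" by (simp add: vec_eq_iff field_simps)
  have F: "(\<Sum>i\<in>UNIV. f i (block_repl blk i ((1/2) *\<^sub>R (x1 + x2)) y))
     \<le> ((\<Sum>i\<in>UNIV. f i (block_repl blk i x1 y)) + (\<Sum>i\<in>UNIV. f i (block_repl blk i x2 y))) / 2"
    using sum_mono[of UNIV, OF f_mid[OF x1 x2 y]] by (simp add: sum.distrib sum_divide_distrib[symmetric])
  have d: "x1 - y - (x2 - y) = x1 - x2" by simp
  have L: "lin y ((1/2) *\<^sub>R (x1 + x2) - y) = (lin y (x1 - y) + lin y (x2 - y)) / 2"
    unfolding m by (rule lin_mid)
  have Q: "quad ((1/2) *\<^sub>R (x1 + x2) - y) = (quad (x1 - y) + quad (x2 - y)) / 2 - (\<Sum>i\<in>UNIV. \<tau> i / 8 * (norm (bp i (x1 - x2)))\<^sup>2)"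
    unfolding m using quad_mid[of "x1 - y" "x2 - y"] by (simp only: d)
  show ?thesis
    unfolding S_expand[of "(1/2) *\<^sub>R (x1 + x2)" y] S_expand[of x1 y] S_expand[of x2 y] L Q
    using F by (simp add: field_simps)
qed

definition "tmin = Min (range \<tau>)"

lemma tmin_le: "tmin \<le> \<tau> i"
  unfolding tmin_def by (rule Min_le) auto

lemma tmin_pos: "tmin > 0"
proof -
  have "tmin \<in> range \<tau>" unfolding tmin_def by (rule Min_in) auto
  then show ?thesis using tau_pos by auto
qed

lemma quad_nonneg: "quad v \<ge> 0"
  unfolding quad_def by (intro sum_nonneg) (simp add: tau_pos less_imp_le)

lemma quad_lower: "quad v \<ge> tmin / 2 * (norm v)\<^sup>2"
proof -
  have "tmin / 2 * (norm v)\<^sup>2 = (\<Sum>i\<in>UNIV. tmin / 2 * (norm (bp i v))\<^sup>2)"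
    by (simp add: norm_sq_blocks[of v blk] sum_distrib_left)
  also have "\<dots> \<le> quad v" unfolding quad_def
    by (intro sum_mono mult_right_mono divide_right_mono tmin_le) auto
  finally show ?thesis .
qed

lemma theta_eq: "\<theta> y = (\<Sum>i\<in>UNIV. f i y) - (\<Sum>i\<in>UNIV. g i y)"
  by (simp add: dc_obj_def sum_subtractf)

lemma S_lower:
  assumes y: "y \<in> X" and z: "z \<in> X"
  shows "S z y \<ge> \<theta> y + (\<Sum>j\<in>UNIV. Df j y) \<bullet> (z - y) - (\<Sum>j\<in>UNIV. Dg j y) \<bullet> (z - y) + quad (z - y)"
proof -
  have fi: "f i (block_repl blk i z y) \<ge> f i y + Df i y \<bullet> bp i (z - y)" for i
    using grad_ineq[OF fconv fder[OF X_U[OF y]] X_U[OF y] X_U[OF repl_X[OF z y]]]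
    by (simp add: repl_eq)
  have F: "(\<Sum>i\<in>UNIV. f i (block_repl blk i z y)) \<ge> (\<Sum>i\<in>UNIV. f i y) + (\<Sum>i\<in>UNIV. Df i y \<bullet> bp i (z - y))"
    using sum_mono[of UNIV, OF fi] by (simp add: sum.distrib)
  have Lz: "lin y (z - y) = (\<Sum>j\<in>UNIV. Df j y) \<bullet> (z - y) - (\<Sum>i\<in>UNIV. Df i y \<bullet> bp i (z - y)) - (\<Sum>j\<in>UNIV. Dg j y) \<bullet> (z - y)"
    unfolding lin_def Dsum by simp
  show ?thesis
    unfolding S_expand[of z y] Lz theta_eq using F by (simp add: field_simps)
qed

lemma xhat_prop:
  assumes y: "y \<in> Xi"
  shows "xhat blk Xs nc h f g Df Dg \<tau> y \<in> Xi \<and> (\<forall>z\<in>Xi. S (xhat blk Xs nc h f g Df Dg \<tau> y) y \<le> S z y)"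
proof -
  let ?P = "\<lambda>x. x \<in> Xi \<and> (\<forall>z\<in>Xi. S x y \<le> S z y)"
  have yX: "y \<in> X" using y Xi_X by auto
  define G where "G = (\<Sum>j\<in>UNIV. Df j y) - (\<Sum>j\<in>UNIV. Dg j y)"
  define R where "R = 2 * norm G / tmin"
  have R0: "R \<ge> 0" unfolding R_def using tmin_pos by simp
  define K where "K = Xi \<inter> cball y R"
  have cK: "compact K" unfolding K_def
    by (intro closed_Int_compact closed_Xi compact_cball)
  have yK: "y \<in> K" unfolding K_def using y R0 by simp
  have contK: "continuous_on K (\<lambda>x. S x y)"
    by (rule continuous_on_subset[OF S_cont[OF yX]]) (use Xi_X in \<open>auto simp: K_def\<close>)
  obtain xs where xs: "xs \<in> K" and xmin: "\<And>z. z \<in> K \<Longrightarrow> S xs y \<le> S z y"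
    using continuous_attains_inf[OF cK _ contK] yK by blast
  have ex: "?P xs"
  proof (intro conjI ballI)
    show "xs \<in> Xi" using xs K_def by auto
    fix z assume z: "z \<in> Xi"
    show "S xs y \<le> S z y"
    proof (cases "z \<in> K")
      case True then show ?thesis by (rule xmin)
    next
      case False
      then have r: "norm (z - y) > R" using z unfolding K_def by (simp add: dist_norm norm_minus_commute)
      have zX: "z \<in> X" using z Xi_X by auto
      have "S z y \<ge> \<theta> y + G \<bullet> (z - y) + tmin / 2 * (norm (z - y))\<^sup>2"
        using S_lower[OF yX zX] quad_lower[of "z - y"] unfolding G_def inner_diff_left by simp
      moreover have "G \<bullet> (z - y) \<ge> - (norm G * norm (z - y))"
        using norm_cauchy_schwarz[of "-G" "z - y"] by simp
      moreover have "tmin / 2 * (norm (z - y))\<^sup>2 \<ge> norm G * norm (z - y)"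
      proof -
        have "norm G = tmin / 2 * R" unfolding R_def using tmin_pos by simp
        also have "\<dots> \<le> tmin / 2 * norm (z - y)" using r tmin_pos by simp
        finally have "norm G * norm (z - y) \<le> tmin / 2 * norm (z - y) * norm (z - y)"
          by (rule mult_right_mono) simp
        then show ?thesis by (simp add: power2_eq_square mult.assoc)
      qed
      ultimately have "S z y \<ge> \<theta> y" by linarith
      moreover have "S xs y \<le> S y y" using xmin yK by simp
      ultimately show ?thesis by (simp add: S_self)
    qed
  qed
  have uniq: "x1 = x2" if p1: "?P x1" and p2: "?P x2" for x1 x2
  proof (rule ccontr)
    assume ne: "x1 \<noteq> x2"
    have x1X: "x1 \<in> X" and x2X: "x2 \<in> X" using p1 p2 Xi_X by auto
    have mXi: "(1/2) *\<^sub>R (x1 + x2) \<in> Xi"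
      using convexD[OF convex_Xi, of x1 x2 "1/2" "1/2"] p1 p2 by (simp add: scaleR_add_right)
    have pos: "(\<Sum>i\<in>UNIV. \<tau> i / 8 * (norm (bp i (x1 - x2)))\<^sup>2) > 0"
    proof -
      have "(\<Sum>i\<in>UNIV. \<tau> i / 8 * (norm (bp i (x1 - x2)))\<^sup>2) = quad (x1 - x2) / 4"
        unfolding quad_def by (simp add: sum_divide_distrib)
      moreover have "quad (x1 - x2) > 0"
      proof -
        have "norm (x1 - x2) > 0" using ne by simp
        then have "tmin / 2 * (norm (x1 - x2))\<^sup>2 > 0" using tmin_pos by simp
        then show ?thesis using quad_lower[of "x1 - x2"] by linarith
      qed
      ultimately show ?thesis by simp
    qed
    have "S ((1/2) *\<^sub>R (x1 + x2)) y < S x1 y"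
    proof -
      have a: "S x1 y \<le> S x2 y" using p1 p2 by blast
      have b: "S x2 y \<le> S x1 y" using p1 p2 by blast
      have aux: "\<And>m a b p. m \<le> (a+b)/2 - p \<Longrightarrow> 0 < p \<Longrightarrow> a \<le> b \<Longrightarrow> b \<le> a \<Longrightarrow> m < (a::real)"
        by (simp add: field_simps)
      show ?thesis by (rule aux[OF S_mid[OF x1X x2X yX] pos a b])
    qed
    moreover have "S x1 y \<le> S ((1/2) *\<^sub>R (x1 + x2)) y" using p1 mXi by blast
    ultimately show False by linarith
  qed
  have "?P (THE x. ?P x)" by (rule theI[of ?P xs]) (use ex uniq in auto)
  then show ?thesis unfolding xhat_def by simp
qed

lemma seg_X: "a \<in> X \<Longrightarrow> b \<in> X \<Longrightarrow> 0 \<le> t \<Longrightarrow> t \<le> 1 \<Longrightarrow> a + t *\<^sub>R (b - a) \<in> X"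
proof -
  assume "a \<in> X" "b \<in> X" "0 \<le> t" "t \<le> 1"
  moreover have "a + t *\<^sub>R (b - a) = (1 - t) *\<^sub>R a + t *\<^sub>R b"
    by (simp add: scaleR_diff_left scaleR_diff_right)
  ultimately show ?thesis using convexD[OF convex_X, of a b "1 - t" t] by simp
qed

lemma fbound:
  assumes z: "z \<in> X" and y: "y \<in> X"
  shows "f i z \<le> f i (block_repl blk i z y) + Df i y \<bullet> (z - block_repl blk i z y) + L i * (norm (z - y))\<^sup>2"
proof -
  define w where "w = block_repl blk i z y"
  have wX: "w \<in> X" unfolding w_def by (rule repl_X[OF z y])
  define \<phi> where "\<phi> t = f i (w + t *\<^sub>R (z - w))" for t
  have der: "(\<phi> has_field_derivative (Df i (w + t *\<^sub>R (z - w)) \<bullet> (z - w))) (at t)"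
    if "0 \<le> t" "t \<le> 1" for t
    unfolding \<phi>_def by (rule line_deriv_s[OF fder[OF X_U[OF seg_X[OF wX z that]]]])
  have cont: "continuous_on {0..1} \<phi>"
  proof (rule DERIV_continuous_on)
    fix t :: real assume t: "t \<in> {0..1}"
    have "(\<phi> has_field_derivative (Df i (w + t *\<^sub>R (z - w)) \<bullet> (z - w))) (at t)"
      using t by (intro der) auto
    then show "(\<phi> has_field_derivative (Df i (w + t *\<^sub>R (z - w)) \<bullet> (z - w))) (at t within {0..1})"
      by (rule has_field_derivative_at_within)
  qed
  obtain l \<xi> where \<xi>: "0 < \<xi>" "\<xi> < 1" and d\<xi>: "DERIV \<phi> \<xi> :> l" and e: "\<phi> 1 - \<phi> 0 = (1 - 0) * l"
  proof -
    have "\<phi> differentiable (at x)" if "0 < x" "x < 1" for x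
      unfolding real_differentiable_def using der[of x] that by auto
    then have "\<exists>l z. 0 < z \<and> z < 1 \<and> DERIV \<phi> z :> l \<and> \<phi> 1 - \<phi> 0 = (1 - 0) * l"
      using MVT[OF zero_less_one cont] by simp
    then show ?thesis using that by blast
  qed
  define p where "p = w + \<xi> *\<^sub>R (z - w)"
  have dp: "DERIV \<phi> \<xi> :> Df i p \<bullet> (z - w)" unfolding p_def
    by (rule der) (use \<xi> in auto)
  have l: "l = Df i p \<bullet> (z - w)" by (rule DERIV_unique[OF d\<xi> dp])
  have pX: "p \<in> X" unfolding p_def using seg_X[OF wX z] \<xi> by simp
  have fe: "f i z - f i w = Df i p \<bullet> (z - w)"
    using e l unfolding \<phi>_def by simp
  have n1: "norm (z - w) \<le> norm (z - y)"
    by (rule norm_mono_comp) (simp add: w_def block_repl_def)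
  have n2: "norm (p - y) \<le> norm (z - y)"
  proof (rule norm_mono_comp)
    fix k
    have "\<bar>\<xi> * (z $ k - y $ k)\<bar> \<le> \<bar>z $ k - y $ k\<bar>"
      using \<xi> by (simp add: abs_mult mult_left_le_one_le)
    then show "\<bar>(p - y) $ k\<bar> \<le> \<bar>(z - y) $ k\<bar>"
      by (simp add: p_def w_def block_repl_def)
  qed
  have "Df i p \<bullet> (z - w) - Df i y \<bullet> (z - w) = (Df i p - Df i y) \<bullet> (z - w)"
    by (simp add: inner_diff_left)
  also have "\<dots> \<le> norm (Df i p - Df i y) * norm (z - w)"
    by (rule norm_cauchy_schwarz)
  also have "\<dots> \<le> (L i * norm (p - y)) * norm (z - y)"
    by (rule mult_mono[OF Lip[OF pX y] n1]) (use Lnn in auto)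
  also have "\<dots> \<le> (L i * norm (z - y)) * norm (z - y)"
    by (intro mult_right_mono mult_left_mono n2 Lnn) auto
  finally have "Df i p \<bullet> (z - w) - Df i y \<bullet> (z - w) \<le> L i * (norm (z - y))\<^sup>2"
    by (simp add: power2_eq_square mult.assoc)
  then show ?thesis using fe unfolding w_def by linarith
qed

lemma quad8: "(\<Sum>i\<in>UNIV. \<tau> i / 8 * (norm (bp i v))\<^sup>2) = quad v / 4"
  unfolding quad_def by (simp add: sum_divide_distrib)

lemma theta_upper:
  assumes z: "z \<in> X" and y: "y \<in> X"
  shows "\<theta> z \<le> S z y - quad (z - y) + (\<Sum>i\<in>UNIV. L i) * (norm (z - y))\<^sup>2"
proof -
  have gi: "g i z \<ge> g i y + Dg i y \<bullet> (z - y)" for i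
    by (rule grad_ineq[OF gconv gder[OF X_U[OF y]] X_U[OF y] X_U[OF z]])
  have G: "(\<Sum>i\<in>UNIV. g i z) \<ge> (\<Sum>i\<in>UNIV. g i y) + (\<Sum>i\<in>UNIV. Dg i y) \<bullet> (z - y)"
    using sum_mono[of UNIV, OF gi] by (simp add: sum.distrib inner_sum_left)
  have F: "(\<Sum>i\<in>UNIV. f i z) \<le> (\<Sum>i\<in>UNIV. f i (block_repl blk i z y))
      + (\<Sum>i\<in>UNIV. Df i y \<bullet> (z - block_repl blk i z y)) + (\<Sum>i\<in>UNIV. L i) * (norm (z - y))\<^sup>2"
    using sum_mono[of UNIV, OF fbound[OF z y]] by (simp add: sum.distrib sum_distrib_right)
  have D: "(\<Sum>i\<in>UNIV. Df i y \<bullet> (z - block_repl blk i z y))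
     = (\<Sum>i\<in>UNIV. \<Sum>j\<in>UNIV - {i}. Df j y \<bullet> bp i (z - y))"
  proof -
    have eqi: "\<And>i. z - block_repl blk i z y = (z - y) - bp i (z - y)" by (simp add: repl_eq)
    have "(\<Sum>i\<in>UNIV. Df i y \<bullet> (z - block_repl blk i z y)) = (\<Sum>i\<in>UNIV. Df i y \<bullet> (z - y) - Df i y \<bullet> bp i (z - y))"
      by (simp only: eqi inner_diff_right)
    also have "\<dots> = (\<Sum>i\<in>UNIV. Df i y) \<bullet> (z - y) - (\<Sum>i\<in>UNIV. Df i y \<bullet> bp i (z - y))"
      by (simp only: sum_subtractf inner_sum_left)
    finally show ?thesis unfolding Dsum .
  qed
  have Lz: "lin y (z - y) = (\<Sum>i\<in>UNIV. Df i y \<bullet> (z - block_repl blk i z y)) - (\<Sum>j\<in>UNIV. Dg j y) \<bullet> (z - y)"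
    unfolding lin_def D ..
  show ?thesis
    unfolding theta_eq S_expand[of z y] Lz using F G by linarith
qed

lemma descent:
  assumes y: "y \<in> Xi"
  defines "xh \<equiv> xhat blk Xs nc h f g Df Dg \<tau> y"
  shows "xh \<in> Xi" and "\<theta> xh \<le> \<theta> y - (3 * tmin / 4 - (\<Sum>i\<in>UNIV. L i)) * (norm (xh - y))\<^sup>2"
proof -
  have P: "xh \<in> Xi" "\<forall>z\<in>Xi. S xh y \<le> S z y" using xhat_prop[OF y] unfolding xh_def by auto
  then show "xh \<in> Xi" by simp
  have xX: "xh \<in> X" and yX: "y \<in> X" using P y Xi_X by auto
  have mXi: "(1/2) *\<^sub>R (xh + y) \<in> Xi"
    using convexD[OF convex_Xi, of xh y "1/2" "1/2"] P y by (simp add: scaleR_add_right)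
  have "S xh y \<le> S ((1/2) *\<^sub>R (xh + y)) y" using P mXi by blast
  also have "\<dots> \<le> (S xh y + S y y) / 2 - quad (xh - y) / 4"
    using S_mid[OF xX yX yX] unfolding quad8 .
  finally have a: "S xh y \<le> \<theta> y - quad (xh - y) / 2" unfolding S_self by (simp add: field_simps)
  have b: "\<theta> xh \<le> S xh y - quad (xh - y) + (\<Sum>i\<in>UNIV. L i) * (norm (xh - y))\<^sup>2"
    by (rule theta_upper[OF xX yX])
  have c: "quad (xh - y) \<ge> tmin / 2 * (norm (xh - y))\<^sup>2" by (rule quad_lower)
  show "\<theta> xh \<le> \<theta> y - (3 * tmin / 4 - (\<Sum>i\<in>UNIV. L i)) * (norm (xh - y))\<^sup>2"
    using a b c by (simp add: field_simps)
qed

lemma lin_scale: "lin y (t *\<^sub>R v) = t * lin y v"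
  unfolding lin_def by (simp add: bp_scale sum_distrib_left right_diff_distrib)

lemma quad_scale: "quad (t *\<^sub>R v) = t\<^sup>2 * quad v"
  unfolding quad_def by (simp add: bp_scale sum_distrib_left power_mult_distrib mult_ac)

lemma S_line_deriv:
  assumes l: "l \<in> X"
  shows "((\<lambda>t. S (l + t *\<^sub>R d) l) has_field_derivative ((\<Sum>i\<in>UNIV. Df i l - Dg i l) \<bullet> d)) (at 0)"
proof -
  have e: "(\<lambda>t. S (l + t *\<^sub>R d) l) = (\<lambda>t. (\<Sum>i\<in>UNIV. f i (l + t *\<^sub>R bp i d)) - (\<Sum>i\<in>UNIV. g i l)
      + t * lin l d + t\<^sup>2 * quad d)"
    by (rule ext) (simp add: S_expand repl_eq bp_scale lin_scale quad_scale)
  have F: "((\<lambda>t. \<Sum>i\<in>UNIV. f i (l + t *\<^sub>R bp i d)) has_field_derivative (\<Sum>i\<in>UNIV. Df i l \<bullet> bp i d)) (at 0)"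
    by (rule DERIV_sum) (rule line_deriv[OF fder[OF X_U[OF l]]])
  have "((\<lambda>t. (\<Sum>i\<in>UNIV. f i (l + t *\<^sub>R bp i d)) - (\<Sum>i\<in>UNIV. g i l)
      + t * lin l d + t\<^sup>2 * quad d) has_field_derivative
      ((\<Sum>i\<in>UNIV. Df i l \<bullet> bp i d) - 0 + 1 * lin l d + real 2 * 0 ^ (2 - Suc 0) * quad d)) (at 0)"
  proof -
    have T1: "((\<lambda>t. t * lin l d) has_field_derivative (1 * lin l d)) (at 0)"
      by (rule DERIV_cmult_right[OF DERIV_ident])
    have T2: "((\<lambda>t. t^2 * quad d) has_field_derivative (real 2 * 0 ^ (2 - Suc 0) * quad d)) (at 0)"
      by (rule DERIV_cmult_right[OF DERIV_pow])
    show ?thesis by (intro DERIV_add DERIV_diff F DERIV_const T1 T2)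
  qed
  moreover have "(\<Sum>i\<in>UNIV. Df i l \<bullet> bp i d) - 0 + 1 * lin l d + real 2 * 0 ^ (2 - Suc 0) * quad d
     = (\<Sum>i\<in>UNIV. Df i l - Dg i l) \<bullet> d"
    unfolding lin_def Dsum by (simp add: sum_subtractf inner_diff_left)
  ultimately show ?thesis unfolding e by simp
qed

lemma stat_crit:
  assumes l: "l \<in> Xi"
    and H: "\<And>z t. z \<in> Xi \<Longrightarrow> 0 < t \<Longrightarrow> t \<le> 1 \<Longrightarrow> S l l \<le> S (l + t *\<^sub>R (z - l)) l"
  shows "dc_stationary blk Xs nc h Df Dg l"
  unfolding dc_stationary_def
proof (intro conjI ballI)
  show "l \<in> Xi" by (rule l)
  fix z assume z: "z \<in> Xi"
  show "(\<Sum>i\<in>UNIV. Df i l - Dg i l) \<bullet> (z - l) \<ge> 0"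
  proof (rule deriv_right_nonneg[OF S_line_deriv])
    show "l \<in> X" using l Xi_X by auto
    fix t :: real assume "0 < t" "t \<le> 1"
    then show "S (l + 0 *\<^sub>R (z - l)) l \<le> S (l + t *\<^sub>R (z - l)) l" using H[OF z] by simp
  qed
qed

end

theorem theorem2:
  fixes blk :: "'n::finite \<Rightarrow> 'i::finite"
    and Xs :: "'i \<Rightarrow> (real^'n) set"
    and f g :: "'i \<Rightarrow> real^'n \<Rightarrow> real"
    and Df Dg :: "'i \<Rightarrow> real^'n \<Rightarrow> real^'n"
    and nc :: nat
    and h :: "nat \<Rightarrow> real^'n \<Rightarrow> real"
    and Dh :: "nat \<Rightarrow> real^'n \<Rightarrow> real^'n"
    and L \<tau> :: "'i \<Rightarrow> real"
    and x :: "nat \<Rightarrow> real^'n"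
  assumes blocks_nonempty: "surj blk"
    and Xs_block: "\<And>i. Xs i \<subseteq> range (block_proj blk i)"
    \<comment> \<open>(A2)\<close>
    and A2: "\<And>i. Xs i \<noteq> {} \<and> closed (Xs i) \<and> convex (Xs i)"
    \<comment> \<open>(A1): convex and C^1 on an open set containing X\<close>
    and A1: "\<exists>U. open U \<and> prod_set blk Xs \<subseteq> U \<and>
       (\<forall>i. convex_on U (f i) \<and> convex_on U (g i)
          \<and> (\<forall>z\<in>U. (f i has_derivative (\<lambda>v. Df i z \<bullet> v)) (at z))
          \<and> (\<forall>z\<in>U. (g i has_derivative (\<lambda>v. Dg i z \<bullet> v)) (at z))
          \<and> continuous_on U (Df i) \<and> continuous_on U (Dg i))
     \<and> (\<forall>j<nc. convex_on U (h j)
          \<and> (\<forall>z\<in>U. (h j has_derivative (\<lambda>v. Dh j z \<bullet> v)) (at z))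
          \<and> continuous_on U (Dh j))"
    \<comment> \<open>Lipschitz gradients of f_i on X\<close>
    and Lip: "\<And>i u v. u \<in> prod_set blk Xs \<Longrightarrow> v \<in> prod_set blk Xs \<Longrightarrow>
       norm (Df i u - Df i v) \<le> L i * norm (u - v)"
    and tau_pos: "\<And>i. \<tau> i > 0"
    and tau_min: "Min (range \<tau>) > 2 * (\<Sum>i\<in>UNIV. L i)"
    \<comment> \<open>Algorithm 1 with gamma = 1 started from x 0 in Xi\<close>
    and x0: "x 0 \<in> feas_set blk Xs nc h"
    \<comment> \<open>(A4)\<close>
    and A4: "compact {z \<in> feas_set blk Xs nc h. dc_obj f g z \<le> dc_obj f g (x 0)}"
    and iter: "\<And>\<nu>. x (Suc \<nu>) = xhat blk Xs nc h f g Df Dg \<tau> (x \<nu>)"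
  shows "(\<exists>\<nu>. dc_stationary blk Xs nc h Df Dg (x \<nu>))
       \<or> ((\<exists>l. limit_point x l)
          \<and> (\<forall>l. limit_point x l \<longrightarrow> dc_stationary blk Xs nc h Df Dg l))"
proof -
  obtain U where U: "open U \<and> prod_set blk Xs \<subseteq> U \<and>
       (\<forall>i. convex_on U (f i) \<and> convex_on U (g i)
          \<and> (\<forall>z\<in>U. (f i has_derivative (\<lambda>v. Df i z \<bullet> v)) (at z))
          \<and> (\<forall>z\<in>U. (g i has_derivative (\<lambda>v. Dg i z \<bullet> v)) (at z))
          \<and> continuous_on U (Df i) \<and> continuous_on U (Dg i))
     \<and> (\<forall>j<nc. convex_on U (h j)
          \<and> (\<forall>z\<in>U. (h j has_derivative (\<lambda>v. Dh j z \<bullet> v)) (at z))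
          \<and> continuous_on U (Dh j))" using A1 by blast
  have x0X: "x 0 \<in> prod_set blk Xs" using x0 by (simp add: feas_set_def)
  show ?thesis
  proof (cases "\<exists>u\<in>prod_set blk Xs. \<exists>v\<in>prod_set blk Xs. u \<noteq> v")
    case False
    have "dc_stationary blk Xs nc h Df Dg (x 0)"
      unfolding dc_stationary_def
    proof (intro conjI ballI)
      show "x 0 \<in> feas_set blk Xs nc h" by (rule x0)
      fix y assume "y \<in> feas_set blk Xs nc h"
      then have "y = x 0" using False x0X by (auto simp: feas_set_def)
      then show "(\<Sum>i\<in>UNIV. Df i (x 0) - Dg i (x 0)) \<bullet> (y - x 0) \<ge> 0" by simp
    qed
    then show ?thesis by blast
  next
    case True
    then obtain u v where u: "u \<in> prod_set blk Xs" and v: "v \<in> prod_set blk Xs" and uv: "u \<noteq> v" by blast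
    have Lnn: "L i \<ge> 0" for i
    proof -
      have "0 \<le> L i * norm (u - v)" using Lip[OF u v, of i] norm_ge_zero order_trans by blast
      moreover have "norm (u - v) > 0" using uv by simp
      ultimately show ?thesis by (simp add: zero_le_mult_iff)
    qed
    have hc: "continuous_on U (h j)" if "j < nc" for j
    proof -
      have "\<forall>z\<in>U. (h j has_derivative (\<lambda>v. Dh j z \<bullet> v)) (at z)" using U that by blast
      then show ?thesis using has_derivative_continuous continuous_at_imp_continuous_on by blast
    qed
    interpret D: dcs blk Xs f g Df Dg nc h L \<tau> U
    proof
      show "\<And>i. closed (Xs i)" "\<And>i. convex (Xs i)" using A2 by auto
      show "open U" "prod_set blk Xs \<subseteq> U" using U by auto
      show "\<And>i. convex_on U (f i)" "\<And>i. convex_on U (g i)" using U by auto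
      show "\<And>i z. z \<in> U \<Longrightarrow> (f i has_derivative (\<lambda>v. Df i z \<bullet> v)) (at z)" using U by blast
      show "\<And>i z. z \<in> U \<Longrightarrow> (g i has_derivative (\<lambda>v. Dg i z \<bullet> v)) (at z)" using U by blast
      show "\<And>i. continuous_on U (Df i)" "\<And>i. continuous_on U (Dg i)" using U by auto
      show "\<And>j. j < nc \<Longrightarrow> continuous_on U (h j)" by (rule hc)
      show "\<And>j. j < nc \<Longrightarrow> convex_on U (h j)" using U by auto
      show "\<And>i u v. u \<in> prod_set blk Xs \<Longrightarrow> v \<in> prod_set blk Xs \<Longrightarrow>
         norm (Df i u - Df i v) \<le> L i * norm (u - v)" by (rule Lip)
      show "\<And>i. L i \<ge> 0" by (rule Lnn)
      show "\<And>i. \<tau> i > 0" by (rule tau_pos)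
    qed
    define c where "c = 3 * D.tmin / 4 - (\<Sum>i\<in>UNIV. L i)"
    have c: "c > 0"
    proof -
      have "(\<Sum>i\<in>UNIV. L i) \<ge> 0" using Lnn by (simp add: sum_nonneg)
      moreover have "D.tmin > 2 * (\<Sum>i\<in>UNIV. L i)" using tau_min by (simp add: D.tmin_def)
      ultimately show ?thesis unfolding c_def by (simp add: field_simps)
    qed
    have xs: "x \<nu> \<in> feas_set blk Xs nc h" for \<nu>
    proof (induction \<nu>)
      case 0 then show ?case by (rule x0)
    next
      case (Suc \<nu>) then show ?case unfolding iter by (rule D.descent(1))
    qed
    have desc: "dc_obj f g (x (Suc \<nu>)) \<le> dc_obj f g (x \<nu>) - c * (norm (x (Suc \<nu>) - x \<nu>))\<^sup>2" for \<nu>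
      using D.descent(2)[OF xs[of \<nu>]] unfolding iter[symmetric] c_def .
    have dec1: "dc_obj f g (x (Suc \<nu>)) \<le> dc_obj f g (x \<nu>)" for \<nu>
    proof -
      have "c * (norm (x (Suc \<nu>) - x \<nu>))\<^sup>2 \<ge> 0" using c by simp
      then show ?thesis using desc[of \<nu>] by linarith
    qed
    have decs: "decseq (\<lambda>\<nu>. dc_obj f g (x \<nu>))" by (rule decseq_SucI) (use dec1 in auto)
    define K where "K = {z \<in> feas_set blk Xs nc h. dc_obj f g z \<le> dc_obj f g (x 0)}"
    have cK: "compact K" unfolding K_def by (rule A4)
    have xK: "x \<nu> \<in> K" for \<nu>
      using xs[of \<nu>] decseqD[OF decs, of 0 \<nu>] unfolding K_def by simp
    have KX: "K \<subseteq> prod_set blk Xs" unfolding K_def using D.Xi_X by auto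
    have thc: "continuous_on K (dc_obj f g)"
    proof -
      have "continuous_on U (\<lambda>z. \<Sum>i\<in>UNIV. f i z - g i z)"
        by (intro continuous_on_sum continuous_on_diff D.fcont D.gcont)
      then have "continuous_on U (dc_obj f g)" unfolding dc_obj_def[abs_def] .
      then show ?thesis by (rule continuous_on_subset) (use KX U in auto)
    qed
    obtain m where "m \<in> K" and m: "\<And>z. z \<in> K \<Longrightarrow> dc_obj f g m \<le> dc_obj f g z"
      using continuous_attains_inf[OF cK _ thc] xK by blast
    obtain Lt where Lt: "(\<lambda>\<nu>. dc_obj f g (x \<nu>)) \<longlonglongrightarrow> Lt"
      using decseq_convergent[OF decs, of "dc_obj f g m"] m xK by blast
    have dth: "(\<lambda>\<nu>. (dc_obj f g (x \<nu>) - dc_obj f g (x (Suc \<nu>))) / c) \<longlonglongrightarrow> 0"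
      using tendsto_divide[OF tendsto_diff[OF Lt LIMSEQ_Suc[OF Lt]] tendsto_const[of c]] c by simp
    have nsq: "(\<lambda>\<nu>. (norm (x (Suc \<nu>) - x \<nu>))\<^sup>2) \<longlonglongrightarrow> 0"
    proof (rule tendsto_sandwich[OF _ _ tendsto_const dth])
      show "\<forall>\<^sub>F \<nu> in sequentially. 0 \<le> (norm (x (Suc \<nu>) - x \<nu>))\<^sup>2" by simp
      show "\<forall>\<^sub>F \<nu> in sequentially. (norm (x (Suc \<nu>) - x \<nu>))\<^sup>2 \<le> (dc_obj f g (x \<nu>) - dc_obj f g (x (Suc \<nu>))) / c"
      proof (rule always_eventually, rule allI)
        fix \<nu>
        have "c * (norm (x (Suc \<nu>) - x \<nu>))\<^sup>2 \<le> dc_obj f g (x \<nu>) - dc_obj f g (x (Suc \<nu>))"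
          using desc[of \<nu>] by linarith
        then show "(norm (x (Suc \<nu>) - x \<nu>))\<^sup>2 \<le> (dc_obj f g (x \<nu>) - dc_obj f g (x (Suc \<nu>))) / c"
          using c by (simp add: pos_le_divide_eq mult.commute)
      qed
    qed
    have dlim: "(\<lambda>\<nu>. x (Suc \<nu>) - x \<nu>) \<longlonglongrightarrow> 0"
    proof -
      have "(\<lambda>\<nu>. sqrt ((norm (x (Suc \<nu>) - x \<nu>))\<^sup>2)) \<longlonglongrightarrow> sqrt 0"
        by (rule tendsto_real_sqrt[OF nsq])
      then have "(\<lambda>\<nu>. norm (x (Suc \<nu>) - x \<nu>)) \<longlonglongrightarrow> 0" by simp
      then show ?thesis by (simp add: tendsto_norm_zero_iff)
    qed
    have ex: "\<exists>l. limit_point x l"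
    proof -
      obtain l r where "l \<in> K" "strict_mono (r :: nat \<Rightarrow> nat)" "(x \<circ> r) \<longlonglongrightarrow> l"
        using seq_compactE[OF compact_imp_seq_compact[OF cK]] xK by metis
      then show ?thesis unfolding limit_point_def by blast
    qed
    have st: "dc_stationary blk Xs nc h Df Dg l" if lp: "limit_point x l" for l
    proof -
      obtain r where r: "strict_mono r" and xr: "(\<lambda>k. x (r k)) \<longlonglongrightarrow> l"
        using lp unfolding limit_point_def o_def by blast
      have lXi: "l \<in> feas_set blk Xs nc h"
        by (rule closed_sequentially[OF D.closed_Xi _ xr]) (use xs in auto)
      have lX: "l \<in> prod_set blk Xs" using lXi D.Xi_X by auto
      have ar: "(\<lambda>k. x (Suc (r k))) \<longlonglongrightarrow> l"
      proof -
        have "(\<lambda>k. x (Suc (r k)) - x (r k)) \<longlonglongrightarrow> 0"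
          using LIMSEQ_subseq_LIMSEQ[OF dlim r] by (simp add: o_def)
        from tendsto_add[OF xr this] show ?thesis by simp
      qed
      show ?thesis
      proof (rule D.stat_crit[OF lXi])
        fix z and t :: real assume z: "z \<in> feas_set blk Xs nc h" and t: "0 < t" "t \<le> 1"
        have seg: "a + t *\<^sub>R (z - a) \<in> feas_set blk Xs nc h" if "a \<in> feas_set blk Xs nc h" for a
        proof -
          have "a + t *\<^sub>R (z - a) = (1 - t) *\<^sub>R a + t *\<^sub>R z"
            by (simp add: scaleR_diff_left scaleR_diff_right)
          then show ?thesis using convexD[OF D.convex_Xi that z, of "1 - t" t] t by simp
        qed
        have ineq: "surr blk f g Df Dg \<tau> (x (Suc (r k))) (x (r k))
            \<le> surr blk f g Df Dg \<tau> (x (Suc (r k)) + t *\<^sub>R (z - x (Suc (r k)))) (x (r k))" for k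
          using D.xhat_prop[OF xs[of "r k"]] seg[OF xs[of "Suc (r k)"]] unfolding iter[symmetric] by blast
        have xsX: "x n \<in> prod_set blk Xs" for n using xs D.Xi_X by auto
        have segX: "x (Suc (r k)) + t *\<^sub>R (z - x (Suc (r k))) \<in> prod_set blk Xs" for k
          using seg[OF xs[of "Suc (r k)"]] D.Xi_X by auto
        have l1: "(\<lambda>k. surr blk f g Df Dg \<tau> (x (Suc (r k))) (x (r k))) \<longlonglongrightarrow> surr blk f g Df Dg \<tau> l l"
          by (rule D.S_tendsto[OF ar xr lX lX]) (use xsX in auto)
        have l2: "(\<lambda>k. surr blk f g Df Dg \<tau> (x (Suc (r k)) + t *\<^sub>R (z - x (Suc (r k)))) (x (r k)))
            \<longlonglongrightarrow> surr blk f g Df Dg \<tau> (l + t *\<^sub>R (z - l)) l"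
          by (rule D.S_tendsto[OF tendsto_add[OF ar tendsto_scaleR[OF tendsto_const tendsto_diff[OF tendsto_const ar]]] xr])
            (use seg[OF lXi] D.Xi_X lX xsX segX in auto)
        show "surr blk f g Df Dg \<tau> l l \<le> surr blk f g Df Dg \<tau> (l + t *\<^sub>R (z - l)) l"
          by (rule LIMSEQ_le[OF l1 l2]) (use ineq in auto)
      qed
    qed
    show ?thesis using ex st by blast
  qed
qed

end
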